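(* Let $p_1,\dots,p_{n}$ be the $p$-values of the tested nodes at a given level $l$ of a rooted tree, and fix a node $j$. Let $T_1,\dots,T_t$ be the subtrees rooted at the ancestors of node $j$ (each containing node $j$), let $p^{(-j)}_{T_s}$ be the set of $p$-values of the tested level-$l$ nodes in $T_s$ other than $j$, and define $$\omega_j=1+\sum_{s=1}^t\mathbb{I}\big(p_j>p^{(-j)}_{T_s}\big),$$ where $p_j>p^{(-j)}_{T_s}$ means that $p_j$ exceeds every element of $p^{(-j)}_{T_s}$. Assume $p_j$ is uniformly distributed on $[0,1]$ and independent of all other $p$-values $(p_i)_{i\ne j}$ at level $l$. Let $\mathcal B^{(-j)}$ denote the event that the vector of all other $p$-values $(p_i)_{i\neq j}$ belongs to a given Borel set. Then for every $\alpha\in(0,1)$, $$\mathbb{E}\big[\omega_j\,\mathbb{I}(\mathcal B^{(-j)},\,p_j\le\alpha)\big]\le\frac{\alpha}{1-\alpha}\,\mathbb{E}\big[\omega_j\,\mathbb{I}(\mathcal B^{(-j)},\,p_j>\alpha)\big].$$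
   Context: A subtree rooted at a node consists of that node and all its descendants. The quantity $\omega_j$ counts node $j$ together with each ancestor of $j$ that would be detected if node $j$ were rejected along with all tested level-$l$ nodes with smaller $p$-values. *)

theory Defs
  imports "HOL-Probability.Probability"
begin

definition rooted_tree :: "'a set \<Rightarrow> 'a \<Rightarrow> ('a \<Rightarrow> 'a) \<Rightarrow> bool" where
  "rooted_tree V r par \<longleftrightarrow> finite V \<and> r \<in> V \<and> par r = r \<and> (\<forall>v\<in>V. par v \<in> V)
     \<and> (\<forall>v\<in>V. \<exists>k. (par ^^ k) v = r)"

definition ancestors :: "('a \<Rightarrow> 'a) \<Rightarrow> 'a \<Rightarrow> 'a set" where
  "ancestors par j = {(par ^^ k) j | k. k \<ge> 1} - {j}"

definition subtree :: "'a set \<Rightarrow> ('a \<Rightarrow> 'a) \<Rightarrow> 'a \<Rightarrow> 'a set" where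
  "subtree V par a = {v \<in> V. \<exists>k. (par ^^ k) v = a}"

definition depth :: "('a \<Rightarrow> 'a) \<Rightarrow> 'a \<Rightarrow> 'a \<Rightarrow> nat" where
  "depth par r v = (LEAST k. (par ^^ k) v = r)"

definition omega :: "'a set \<Rightarrow> ('a \<Rightarrow> 'a) \<Rightarrow> 'a set \<Rightarrow> ('a \<Rightarrow> 'm \<Rightarrow> real) \<Rightarrow> 'a \<Rightarrow> 'm \<Rightarrow> real" where
  "omega V par L p j x = 1 + (\<Sum>a\<in>ancestors par j.
      (if (\<forall>i \<in> subtree V par a \<inter> L - {j}. p i x < p j x) then 1 else 0))"

end

theory Submission
  imports Defs
begin

theorem lemma2:
  fixes M :: "'m measure" and V :: "'a set" and r :: 'a and par :: "'a \<Rightarrow> 'a"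
    and L :: "'a set" and l :: nat and j :: 'a and p :: "'a \<Rightarrow> 'm \<Rightarrow> real"
    and B :: "('a \<Rightarrow> real) set" and \<alpha> :: real
  assumes "prob_space M"
    and "rooted_tree V r par"
    and "L \<subseteq> {v \<in> V. depth par r v = l}"
    and "j \<in> L"
    and "\<forall>i\<in>L. p i \<in> borel_measurable M"
    and "distr M lborel (p j) = uniform_measure lborel {0..1}"
    and "prob_space.indep_var M (PiM {j} (\<lambda>_. borel)) (\<lambda>x. \<lambda>i\<in>{j}. p i x)
           (PiM (L - {j}) (\<lambda>_. borel))
           (\<lambda>x. \<lambda>i\<in>L - {j}. p i x)"
    and "B \<in> sets (PiM (L - {j}) (\<lambda>_. borel))"
    and "0 < \<alpha>" and "\<alpha> < 1"
  shows "integral\<^sup>L M (\<lambda>x. omega V par L p j x *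
            indicator {x. (\<lambda>i\<in>L - {j}. p i x) \<in> B \<and> p j x \<le> \<alpha>} x)
         \<le> \<alpha> / (1 - \<alpha>) * integral\<^sup>L M (\<lambda>x. omega V par L p j x *
            indicator {x. (\<lambda>i\<in>L - {j}. p i x) \<in> B \<and> p j x > \<alpha>} x)"
proof -
  interpret P: prob_space M by fact
  have finV: "finite V" using assms(2) unfolding rooted_tree_def by blast
  have finL: "finite L" using assms(3) by (intro finite_subset[OF _ finV]) auto
  define A where "A = ancestors par j"
  define S where "S a = subtree V par a \<inter> L - {j}" for a
  have finS: "finite (S a)" for a using finL unfolding S_def by auto
  have SL: "S a \<subseteq> L - {j}" for a unfolding S_def by auto
  define Y where "Y x = (\<lambda>i\<in>L - {j}. p i x)" for x
  define X where "X x = (\<lambda>i\<in>{j}. p i x)" for x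
  define g :: "('a \<Rightarrow> real) \<Rightarrow> real" where "g y = (1 + (\<Sum>a\<in>A. if \<forall>i\<in>S a. y i < \<alpha> then 1 else 0)) * indicator B y" for y
  define h :: "('a \<Rightarrow> real) \<Rightarrow> real" where "h u = indicator {..\<alpha>} (u j)" for u
  define w where "w x = omega V par L p j x" for x
  have w_eq: "w x = 1 + (\<Sum>a\<in>A. if \<forall>i\<in>S a. p i x < p j x then 1 else 0)" for x
    unfolding w_def omega_def A_def S_def by simp
  have pm: "p i \<in> borel_measurable M" if "i \<in> L" for i using assms(5) that by blast
  have pjm: "p j \<in> borel_measurable M" using pm assms(4) by blast
  have sum_bd: "(\<Sum>a\<in>A. if Q a then 1 else 0) \<le> real (card A)" for Q :: "'a \<Rightarrow> bool"
    using sum_bounded_above[of A "\<lambda>a. if Q a then 1 else (0::real)" 1] by auto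
  have sum_nn: "0 \<le> (\<Sum>a\<in>A. if Q a then 1 else (0::real))" for Q :: "'a \<Rightarrow> bool"
    by (rule sum_nonneg) auto
  have gm: "g \<in> borel_measurable (PiM (L - {j}) (\<lambda>_. borel))"
  proof -
    have "(\<lambda>y. if \<forall>i\<in>S a. y i < \<alpha> then 1 else (0::real)) \<in> borel_measurable (PiM (L - {j}) (\<lambda>_. borel))" for a
    proof (rule measurable_If[OF measurable_const measurable_const])
      show "{y \<in> space (PiM (L - {j}) (\<lambda>_. borel)). \<forall>i\<in>S a. (y::'a\<Rightarrow>real) i < \<alpha>} \<in> sets (PiM (L - {j}) (\<lambda>_. borel))"
      proof -
        have "Measurable.pred (PiM (L - {j}) (\<lambda>_. borel)) (\<lambda>y. \<forall>i\<in>S a. (y::'a\<Rightarrow>real) i < \<alpha>)"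
        proof (intro pred_intros_finite(3)[OF finS])
          fix i assume "i \<in> S a"
          then have "i \<in> L - {j}" using SL by auto
          then show "Measurable.pred (PiM (L - {j}) (\<lambda>_. borel)) (\<lambda>y. (y::'a\<Rightarrow>real) i < \<alpha>)" by measurable
        qed
        then show ?thesis unfolding pred_def by simp
      qed
    qed simp_all
    note ifm = this
    define c where "c a = (\<lambda>y. if \<forall>i\<in>S a. y i < \<alpha> then 1 else (0::real))" for a
    have cm: "c a \<in> borel_measurable (PiM (L - {j}) (\<lambda>_. borel))" for a
      unfolding c_def by (rule ifm)
    have "(\<lambda>y. (1 + (\<Sum>a\<in>A. c a y)) * indicator B y) \<in> borel_measurable (PiM (L - {j}) (\<lambda>_. borel))"
      by (intro borel_measurable_times borel_measurable_add borel_measurable_sum borel_measurable_indicator borel_measurable_const cm assms(8))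
    moreover have "g = (\<lambda>y. (1 + (\<Sum>a\<in>A. c a y)) * indicator B y)"
      by (rule ext) (simp add: g_def c_def)
    ultimately show ?thesis by simp
  qed
  have hm: "h \<in> borel_measurable (PiM {j} (\<lambda>_. borel))"
    unfolding h_def by measurable
  have Ym: "Y \<in> measurable M (PiM (L - {j}) (\<lambda>_. borel))"
    unfolding Y_def using pm by (intro measurable_restrict) auto
  have Xm: "X \<in> measurable M (PiM {j} (\<lambda>_. borel))"
    unfolding X_def using pjm by (intro measurable_restrict) auto
  have gYm: "(\<lambda>x. g (Y x)) \<in> borel_measurable M" using gm Ym by measurable
  have hXm: "(\<lambda>x. h (X x)) \<in> borel_measurable M" using hm Xm by measurable
  have gbd: "\<bar>g y\<bar> \<le> 1 + real (card A)" for y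
    using sum_bd sum_nn unfolding g_def by (auto simp: indicator_def abs_mult)
  have hbd: "\<bar>h u\<bar> \<le> 1" for u unfolding h_def by (auto simp: indicator_def)
  have gYi: "integrable M (\<lambda>x. g (Y x))"
    by (rule P.integrable_const_bound[where B="1 + real (card A)"]) (use gbd gYm in auto)
  have hXi: "integrable M (\<lambda>x. h (X x))"
    by (rule P.integrable_const_bound[where B=1]) (use hbd hXm in auto)
  have ind: "P.indep_var borel (\<lambda>x. h (X x)) borel (\<lambda>x. g (Y x))"
  proof -
    have "P.indep_var (PiM {j} (\<lambda>_. borel)) X (PiM (L - {j}) (\<lambda>_. borel)) Y"
      using assms(7) unfolding X_def Y_def .
    from P.indep_var_compose[OF this hm gm] show ?thesis by (simp add: comp_def)
  qed
  have Eh: "integral\<^sup>L M (\<lambda>x. h (X x)) = \<alpha>"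
  proof -
    have "integral\<^sup>L M (\<lambda>x. h (X x)) = integral\<^sup>L M (indicator {x \<in> space M. p j x \<le> \<alpha>})"
      by (rule Bochner_Integration.integral_cong) (auto simp: h_def X_def indicator_def)
    also have "\<dots> = measure M {x \<in> space M. p j x \<le> \<alpha>}" by (simp, intro arg_cong[where f="measure M"], auto)
    also have "\<dots> = measure (distr M lborel (p j)) {..\<alpha>}"
      using pjm by (subst measure_distr) (auto simp: vimage_def Int_def conj_commute)
    also have "\<dots> = \<alpha>" using assms(6,9,10) by simp
    finally show ?thesis .
  qed
  have Egh: "integral\<^sup>L M (\<lambda>x. g (Y x) * h (X x)) = \<alpha> * integral\<^sup>L M (\<lambda>x. g (Y x))"
    using P.indep_var_lebesgue_integral[OF ind hXi gYi] Eh by (simp add: mult.commute)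
  have ghi: "integrable M (\<lambda>x. g (Y x) * h (X x))"
    using P.indep_var_integrable[OF ind hXi gYi] by (simp add: mult.commute)
  define I1 :: "'m \<Rightarrow> real" where "I1 x = indicator {x. (\<lambda>i\<in>L - {j}. p i x) \<in> B \<and> p j x \<le> \<alpha>} x" for x
  define I2 :: "'m \<Rightarrow> real" where "I2 x = indicator {x. (\<lambda>i\<in>L - {j}. p i x) \<in> B \<and> p j x > \<alpha>} x" for x
  have wnn: "0 \<le> w x" for x
    using sum_nn[of "\<lambda>a. \<forall>i\<in>S a. p i x < p j x"] unfolding w_eq by linarith
  have wle: "w x \<le> 1 + real (card A)" for x
    using sum_bd[of "\<lambda>a. \<forall>i\<in>S a. p i x < p j x"] unfolding w_eq by linarith
  have wbd: "\<bar>w x * I x\<bar> \<le> 1 + real (card A)" if "\<bar>I x\<bar> \<le> 1" for x and I :: "'m \<Rightarrow> real"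
  proof -
    have "\<bar>w x * I x\<bar> = w x * \<bar>I x\<bar>" using wnn by (simp add: abs_mult)
    also have "\<dots> \<le> (1 + real (card A)) * 1"
      using wnn wle that by (intro mult_mono) auto
    finally show ?thesis by simp
  qed
  have wm: "w \<in> borel_measurable M"
  proof -
    have "(\<lambda>x. if \<forall>i\<in>S a. p i x < p j x then 1 else (0::real)) \<in> borel_measurable M" for a
    proof (rule measurable_If[OF measurable_const measurable_const])
      have "Measurable.pred M (\<lambda>x. \<forall>i\<in>S a. p i x < p j x)"
      proof (intro pred_intros_finite(3)[OF finS])
        fix i assume "i \<in> S a"
        then have "i \<in> L" using SL by auto
        then show "Measurable.pred M (\<lambda>x. p i x < p j x)"
          unfolding pred_def using pm pjm by (intro borel_measurable_less) auto
      qed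
      then show "{x \<in> space M. \<forall>i\<in>S a. p i x < p j x} \<in> sets M" unfolding pred_def by simp
    qed simp_all
    note ifm = this
    define c where "c a = (\<lambda>x. if \<forall>i\<in>S a. p i x < p j x then 1 else (0::real))" for a
    have cm: "c a \<in> borel_measurable M" for a
      unfolding c_def by (rule ifm)
    have "(\<lambda>x. 1 + (\<Sum>a\<in>A. c a x)) \<in> borel_measurable M"
      by (intro borel_measurable_add borel_measurable_sum borel_measurable_const cm)
    then have "(\<lambda>x. 1 + (\<Sum>a\<in>A. if \<forall>i\<in>S a. p i x < p j x then 1 else (0::real))) \<in> borel_measurable M"
      by (simp add: c_def)
    moreover have "w = (\<lambda>x. 1 + (\<Sum>a\<in>A. if \<forall>i\<in>S a. p i x < p j x then 1 else (0::real)))"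
      using w_eq by (rule ext)
    ultimately show ?thesis by simp
  qed
  have Bs: "{x \<in> space M. Y x \<in> B} \<in> sets M"
  proof -
    have "Y -` B \<inter> space M \<in> sets M" by (rule measurable_sets[OF Ym assms(8)])
    moreover have "Y -` B \<inter> space M = {x \<in> space M. Y x \<in> B}" by auto
    ultimately show ?thesis by simp
  qed
  have pjle: "{x \<in> space M. p j x \<le> \<alpha>} \<in> sets M" using pjm by measurable
  have pjgt: "{x \<in> space M. p j x > \<alpha>} \<in> sets M" using pjm by measurable
  have I1m: "I1 \<in> borel_measurable M"
  proof -
    let ?S = "{x \<in> space M. Y x \<in> B} \<inter> {x \<in> space M. p j x \<le> \<alpha>}"
    have "indicator ?S \<in> borel_measurable M"
      using sets.Int[OF Bs pjle] by (rule borel_measurable_indicator)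
    moreover have "indicator ?S x = I1 x" if "x \<in> space M" for x
      using that by (simp add: I1_def Y_def indicator_def)
    ultimately show ?thesis using measurable_cong by blast
  qed
  have I2m: "I2 \<in> borel_measurable M"
  proof -
    let ?S = "{x \<in> space M. Y x \<in> B} \<inter> {x \<in> space M. p j x > \<alpha>}"
    have "indicator ?S \<in> borel_measurable M"
      using sets.Int[OF Bs pjgt] by (rule borel_measurable_indicator)
    moreover have "indicator ?S x = I2 x" if "x \<in> space M" for x
      using that by (simp add: I2_def Y_def indicator_def)
    ultimately show ?thesis using measurable_cong by blast
  qed
  have i1: "integrable M (\<lambda>x. w x * I1 x)"
  proof (rule P.integrable_const_bound[where B="1 + real (card A)"])
    have "\<bar>I1 x\<bar> \<le> 1" for x by (simp add: I1_def indicator_def)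
    then show "AE x in M. norm (w x * I1 x) \<le> 1 + real (card A)"
      using wbd[of I1] by (intro AE_I2) simp
    show "(\<lambda>x. w x * I1 x) \<in> borel_measurable M" by (rule borel_measurable_times[OF wm I1m])
  qed
  have i2: "integrable M (\<lambda>x. w x * I2 x)"
  proof (rule P.integrable_const_bound[where B="1 + real (card A)"])
    have "\<bar>I2 x\<bar> \<le> 1" for x by (simp add: I2_def indicator_def)
    then show "AE x in M. norm (w x * I2 x) \<le> 1 + real (card A)"
      using wbd[of I2] by (intro AE_I2) simp
    show "(\<lambda>x. w x * I2 x) \<in> borel_measurable M" by (rule borel_measurable_times[OF wm I2m])
  qed
  have le1: "w x * I1 x \<le> g (Y x) * h (X x)" for x
  proof (cases "Y x \<in> B \<and> p j x \<le> \<alpha>")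
    case True
    have "(if \<forall>i\<in>S a. p i x < p j x then 1 else 0) \<le> (if \<forall>i\<in>S a. Y x i < \<alpha> then 1 else (0::real))" for a
      using True SL[of a] by (auto simp: Y_def intro: less_le_trans)
    then have "w x \<le> 1 + (\<Sum>a\<in>A. if \<forall>i\<in>S a. Y x i < \<alpha> then 1 else (0::real))"
      unfolding w_eq by (simp add: sum_mono)
    then show ?thesis using True by (simp add: I1_def g_def h_def X_def Y_def indicator_def)
  next
    case False
    then have "I1 x = 0" by (auto simp: I1_def Y_def indicator_def)
    moreover have "0 \<le> g (Y x) * h (X x)"
      using sum_nn by (simp add: g_def h_def indicator_def)
    ultimately show ?thesis by simp
  qed
  have le2: "g (Y x) - g (Y x) * h (X x) \<le> w x * I2 x" for x
  proof (cases "Y x \<in> B \<and> p j x > \<alpha>")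
    case True
    have "(if \<forall>i\<in>S a. Y x i < \<alpha> then 1 else (0::real)) \<le> (if \<forall>i\<in>S a. p i x < p j x then 1 else 0)" for a
      using True SL[of a] by (auto simp: Y_def intro: less_trans)
    then have "1 + (\<Sum>a\<in>A. if \<forall>i\<in>S a. Y x i < \<alpha> then 1 else (0::real)) \<le> w x"
      unfolding w_eq by (simp add: sum_mono)
    then show ?thesis using True by (simp add: I2_def g_def h_def X_def Y_def indicator_def)
  next
    case False
    then show ?thesis by (auto simp: I2_def g_def h_def X_def Y_def indicator_def)
  qed
  have "integral\<^sup>L M (\<lambda>x. w x * I1 x) \<le> integral\<^sup>L M (\<lambda>x. g (Y x) * h (X x))"
    by (rule integral_mono[OF i1 ghi le1])
  also have "\<dots> = \<alpha> * integral\<^sup>L M (\<lambda>x. g (Y x))" by (rule Egh)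
  finally have L1: "integral\<^sup>L M (\<lambda>x. w x * I1 x) \<le> \<alpha> * integral\<^sup>L M (\<lambda>x. g (Y x))" .
  have "(1 - \<alpha>) * integral\<^sup>L M (\<lambda>x. g (Y x)) = integral\<^sup>L M (\<lambda>x. g (Y x) - g (Y x) * h (X x))"
    using Egh gYi ghi by (simp add: algebra_simps)
  also have "\<dots> \<le> integral\<^sup>L M (\<lambda>x. w x * I2 x)"
    by (rule integral_mono[OF _ i2 le2]) (use gYi ghi in auto)
  finally have L2: "(1 - \<alpha>) * integral\<^sup>L M (\<lambda>x. g (Y x)) \<le> integral\<^sup>L M (\<lambda>x. w x * I2 x)" .
  have "integral\<^sup>L M (\<lambda>x. w x * I1 x) \<le> \<alpha> / (1 - \<alpha>) * integral\<^sup>L M (\<lambda>x. w x * I2 x)"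
  proof -
    have "\<alpha> * integral\<^sup>L M (\<lambda>x. g (Y x)) = \<alpha> / (1 - \<alpha>) * ((1 - \<alpha>) * integral\<^sup>L M (\<lambda>x. g (Y x)))"
      using assms(10) by simp
    also have "\<dots> \<le> \<alpha> / (1 - \<alpha>) * integral\<^sup>L M (\<lambda>x. w x * I2 x)"
      using L2 assms(9,10) by (intro mult_left_mono) auto
    finally show ?thesis using L1 by linarith
  qed
  then show ?thesis unfolding w_def I1_def I2_def .
qed

end
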